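(* Let $\mathcal G=(G_n)_{n\in\mathbb N}=((V_n,E_n))_{n\in\mathbb N}$ be an expander sequence. Let $\varepsilon>0$ and let $(\tilde G_n)$ be such that each $\tilde G_n$ is obtained from $G_n$ by deleting edges such that each vertex keeps at least a $(1/2+\varepsilon)$ fraction of its edges. Let $A_n\subseteq V_n$ with $|A_n|=o(n)$. (a) There is $B_n\subseteq A_n$ with $|B_n|=(1-o(1))|A_n|$ such that for all $u\in B_n$, $\frac{|N_{\tilde G_n}(u)\cap A_n|}{|N_{\tilde G_n}(u)|}=o(1)$. (b) There is $B_n\subseteq V_n\setminus A_n$ with $|V_n\setminus(A_n\cup B_n)|=o(|A_n|)$ such that for all $v\in B_n$, $\frac{|N_{\tilde G_n}(v)\cap A_n|}{|N_{\tilde G_n}(v)|}=o(1)$.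
   Context: An expander sequence is a sequence $(G_n)$ of connected graphs, $G_n$ on $n$ vertices with minimum degree $\delta_n$, maximum degree $\Delta_n$, and $\lambda_n=\max\{|\mu_2|,|\mu_n|\}$ (adjacency eigenvalues $\mu_1\ge\dots\ge\mu_n$), such that $\Delta_n/\delta_n=1+o(1)$ and $\lambda_n=o(\Delta_n)$. "Keeps at least a $(1/2+\varepsilon)$ fraction" means $d_{\tilde G_n}(v)\ge(1/2+\varepsilon)d_{G_n}(v)$. $N_{\tilde G_n}(u)$ is the neighbourhood of $u$ in $\tilde G_n$. Asymptotic notation is as $n\to\infty$; the $o(1)$ bounds on the ratios hold uniformly over the vertices of $B_n$. *)

theory Defs
  imports "Jordan_Normal_Form.Char_Poly" "HOL-Library.Landau_Symbols" "HOL-Library.Multiset"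
begin

definition is_graph :: "nat \<Rightarrow> (nat \<Rightarrow> nat \<Rightarrow> bool) \<Rightarrow> bool" where
  "is_graph n E \<longleftrightarrow> (\<forall>u v. E u v \<longrightarrow> u < n \<and> v < n \<and> u \<noteq> v \<and> E v u)"

definition connected_graph :: "nat \<Rightarrow> (nat \<Rightarrow> nat \<Rightarrow> bool) \<Rightarrow> bool" where
  "connected_graph n E \<longleftrightarrow> (\<forall>u<n. \<forall>v<n. E\<^sup>*\<^sup>* u v)"

definition nbhd :: "nat \<Rightarrow> (nat \<Rightarrow> nat \<Rightarrow> bool) \<Rightarrow> nat \<Rightarrow> nat set" where
  "nbhd n E v = {u. u < n \<and> E v u}"

definition deg :: "nat \<Rightarrow> (nat \<Rightarrow> nat \<Rightarrow> bool) \<Rightarrow> nat \<Rightarrow> nat" where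
  "deg n E v = card (nbhd n E v)"

definition min_deg :: "nat \<Rightarrow> (nat \<Rightarrow> nat \<Rightarrow> bool) \<Rightarrow> nat" where
  "min_deg n E = Min (deg n E ` {..<n})"

definition max_deg :: "nat \<Rightarrow> (nat \<Rightarrow> nat \<Rightarrow> bool) \<Rightarrow> nat" where
  "max_deg n E = Max (deg n E ` {..<n})"

definition adj_mat :: "nat \<Rightarrow> (nat \<Rightarrow> nat \<Rightarrow> bool) \<Rightarrow> real mat" where
  "adj_mat n E = mat n n (\<lambda>(i, j). if E i j then 1 else 0)"

text \<open>Adjacency eigenvalues (with multiplicity) in non-increasing order mu_1 >= ... >= mu_n;
  list index k-1 holds mu_k.  (A real symmetric matrix has only real eigenvalues.)\<close>
definition adj_eigs :: "nat \<Rightarrow> (nat \<Rightarrow> nat \<Rightarrow> bool) \<Rightarrow> real list" where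
  "adj_eigs n E = rev (sorted_list_of_multiset (proots (char_poly (adj_mat n E))))"

definition spec_lambda :: "nat \<Rightarrow> (nat \<Rightarrow> nat \<Rightarrow> bool) \<Rightarrow> real" where
  "spec_lambda n E = max \<bar>adj_eigs n E ! 1\<bar> \<bar>adj_eigs n E ! (n - 1)\<bar>"

definition expander_sequence :: "(nat \<Rightarrow> nat \<Rightarrow> nat \<Rightarrow> bool) \<Rightarrow> bool" where
  "expander_sequence G \<longleftrightarrow>
     (\<forall>n. is_graph n (G n) \<and> connected_graph n (G n)) \<and>
     ((\<lambda>n. real (max_deg n (G n)) / real (min_deg n (G n))) \<longlonglongrightarrow> 1) \<and>
     (\<lambda>n. spec_lambda n (G n)) \<in> o(\<lambda>n. real (max_deg n (G n)))"

end

theory Submission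
  imports Defs
begin


definition mv :: "nat \<Rightarrow> (nat \<Rightarrow> nat \<Rightarrow> real) \<Rightarrow> (nat \<Rightarrow> real) \<Rightarrow> nat \<Rightarrow> real" where
  "mv n A x = (\<lambda>i. \<Sum>j<n. A i j * x j)"
definition dotp :: "nat \<Rightarrow> (nat \<Rightarrow> real) \<Rightarrow> (nat \<Rightarrow> real) \<Rightarrow> real" where
  "dotp n x y = (\<Sum>i<n. x i * y i)"
definition symm :: "nat \<Rightarrow> (nat \<Rightarrow> nat \<Rightarrow> real) \<Rightarrow> bool" where
  "symm n A \<longleftrightarrow> (\<forall>i<n. \<forall>j<n. A i j = A j i)"
definition mm :: "nat \<Rightarrow> (nat \<Rightarrow> nat \<Rightarrow> real) \<Rightarrow> (nat \<Rightarrow> nat \<Rightarrow> real) \<Rightarrow> nat \<Rightarrow> nat \<Rightarrow> real" where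
  "mm n A B = (\<lambda>i j. \<Sum>k<n. A i k * B k j)"

lemma mv_cong: "(\<And>j. j < n \<Longrightarrow> x j = y j) \<Longrightarrow> mv n A x = mv n A y"
  unfolding mv_def by (intro ext sum.cong) auto

lemma dotp_cong: "(\<And>j. j < n \<Longrightarrow> y j = z j) \<Longrightarrow> dotp n x y = dotp n x z"
  unfolding dotp_def by (intro sum.cong) auto

lemma mv_mm: "mv n (mm n A B) x = mv n A (mv n B x)"
  unfolding mv_def mm_def
proof (rule ext)
  fix i
  have "(\<Sum>j<n. (\<Sum>k<n. A i k * B k j) * x j) = (\<Sum>j<n. \<Sum>k<n. A i k * (B k j * x j))"
    by (simp add: sum_distrib_right mult.assoc)
  also have "\<dots> = (\<Sum>k<n. \<Sum>j<n. A i k * (B k j * x j))" by (rule sum.swap)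
  also have "\<dots> = (\<Sum>k<n. A i k * (\<Sum>j<n. B k j * x j))" by (simp add: sum_distrib_left)
  finally show "(\<Sum>j<n. (\<Sum>k<n. A i k * B k j) * x j) = (\<Sum>k<n. A i k * (\<Sum>j<n. B k j * x j))" .
qed

lemma dotp_mv_symm: assumes "symm n A" shows "dotp n (mv n A x) y = dotp n x (mv n A y)"
proof -
  have "dotp n (mv n A x) y = (\<Sum>i<n. \<Sum>j<n. A i j * x j * y i)"
    unfolding dotp_def mv_def by (simp add: sum_distrib_right)
  also have "\<dots> = (\<Sum>j<n. \<Sum>i<n. A i j * x j * y i)" by (rule sum.swap)
  also have "\<dots> = (\<Sum>j<n. \<Sum>i<n. x j * (A j i * y i))"
    using assms unfolding symm_def by (intro sum.cong refl) (auto simp: mult_ac)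
  also have "\<dots> = dotp n x (mv n A y)"
    unfolding dotp_def mv_def by (simp add: sum_distrib_left)
  finally show ?thesis .
qed

lemma sum_delta_r: assumes "n < (m::nat)" shows "(\<Sum>i<m. f i * (if i = n then (1::real) else 0)) = f n"
proof -
  have "(\<Sum>i<m. f i * (if i = n then (1::real) else 0)) = (\<Sum>i<m. if i = n then f i else 0)"
    by (rule sum.cong) auto
  also have "\<dots> = f n" using assms by (subst sum.delta) auto
  finally show ?thesis .
qed
lemma sum_delta_l: assumes "n < (m::nat)" shows "(\<Sum>i<m. (if i = n then (1::real) else 0) * f i) = f n"
  using sum_delta_r[OF assms, of f] by (simp add: mult.commute)
lemma sum_delta_r': assumes "n < (m::nat)" shows "(\<Sum>i<m. f i * (if n = i then (1::real) else 0)) = f n"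
  using sum_delta_r[OF assms, of f] by (simp add: eq_commute)
lemma sum_delta_l': assumes "n < (m::nat)" shows "(\<Sum>i<m. (if n = i then (1::real) else 0) * f i) = f n"
  using sum_delta_r[OF assms, of f] by (simp add: eq_commute mult.commute)

lemma real_eigvec:
  fixes A :: "nat \<Rightarrow> nat \<Rightarrow> real"
  assumes n: "n > 0" and S: "symm n A"
  shows "\<exists>r x. (\<exists>i<n. x i \<noteq> 0) \<and> (\<forall>i<n. mv n A x i = r * x i)"
proof -
  define Ac where "Ac = mat n n (\<lambda>(i,j). complex_of_real (A i j))"
  have Ac: "Ac \<in> carrier_mat n n" unfolding Ac_def by simp
  obtain as where cp: "char_poly Ac = (\<Prod>a\<leftarrow>as. [:- a, 1:])" and len: "length as = n"
    using char_poly_factorized[OF Ac] by blast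
  then obtain c rest where as: "as = c # rest" using n by (cases as) auto
  have "poly (char_poly Ac) c = 0" unfolding cp as by simp
  hence "eigenvalue Ac c" using eigenvalue_root_char_poly[OF Ac] by simp
  then obtain w where ev: "eigenvector Ac w c" unfolding eigenvalue_def by blast
  hence w: "w \<in> carrier_vec n" "w \<noteq> 0\<^sub>v n" "Ac *\<^sub>v w = c \<cdot>\<^sub>v w"
    unfolding eigenvector_def using Ac by auto
  have eq: "(\<Sum>j<n. complex_of_real (A i j) * w $ j) = c * w $ i" if "i < n" for i
  proof -
    have "(Ac *\<^sub>v w) $ i = c * w $ i" using w(3) that w(1) by simp
    moreover have "(Ac *\<^sub>v w) $ i = (\<Sum>j<n. complex_of_real (A i j) * w $ j)"
      using that w(1) unfolding Ac_def by (simp add: scalar_prod_def lessThan_atLeast0)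
    ultimately show ?thesis by simp
  qed
  define Q where "Q = (\<Sum>i<n. cnj (w $ i) * (\<Sum>j<n. complex_of_real (A i j) * w $ j))"
  define N where "N = (\<Sum>i<n. (Re (w $ i))^2 + (Im (w $ i))^2)"
  have QN: "Q = c * complex_of_real N"
  proof -
    have "Q = (\<Sum>i<n. c * (cnj (w $ i) * w $ i))" unfolding Q_def
    proof (intro sum.cong refl)
      fix i assume "i \<in> {..<n}" hence i: "i < n" by simp
      show "cnj (w $ i) * (\<Sum>j<n. complex_of_real (A i j) * w $ j) = c * (cnj (w $ i) * w $ i)"
        by (simp only: eq[OF i]) (simp add: mult_ac)
    qed
    also have "\<dots> = c * complex_of_real N" unfolding N_def
      by (simp add: sum_distrib_left complex_mult_cnj mult.commute)
    finally show ?thesis .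
  qed
  have "cnj Q = (\<Sum>i<n. \<Sum>j<n. w $ i * complex_of_real (A i j) * cnj (w $ j))"
    unfolding Q_def by (simp add: sum_distrib_left mult_ac)
  also have "\<dots> = (\<Sum>j<n. \<Sum>i<n. w $ i * complex_of_real (A i j) * cnj (w $ j))" by (rule sum.swap)
  also have "\<dots> = (\<Sum>j<n. \<Sum>i<n. cnj (w $ j) * (complex_of_real (A j i) * w $ i))"
  proof (intro sum.cong refl)
    fix j i assume "j \<in> {..<n}" "i \<in> {..<n}"
    hence "A i j = A j i" using S unfolding symm_def by auto
    thus "w $ i * complex_of_real (A i j) * cnj (w $ j) = cnj (w $ j) * (complex_of_real (A j i) * w $ i)"
      by (simp add: mult_ac)
  qed
  also have "\<dots> = Q" unfolding Q_def by (simp add: sum_distrib_left)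
  finally have cQ: "cnj Q = Q" .
  have "Im (cnj Q) = Im Q" using cQ by simp
  hence ImQ: "Im Q = 0" by simp
  have "\<exists>i<n. w $ i \<noteq> 0"
  proof (rule ccontr)
    assume "\<not> (\<exists>i<n. w $ i \<noteq> 0)"
    hence "w = 0\<^sub>v n" using w(1) by (intro eq_vecI) auto
    thus False using w(2) by simp
  qed
  then obtain i0 where i0: "i0 < n" "w $ i0 \<noteq> 0" by blast
  have "N \<ge> (Re (w $ i0))^2 + (Im (w $ i0))^2" unfolding N_def
    by (rule member_le_sum[where f="\<lambda>i. (Re (w $ i))^2 + (Im (w $ i))^2"]) (use i0 in auto)
  moreover have "(Re (w $ i0))^2 + (Im (w $ i0))^2 > 0" using i0
  proof -
    have "Re (w $ i0) \<noteq> 0 \<or> Im (w $ i0) \<noteq> 0" using i0(2) complex_eqI by force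
    thus ?thesis by (auto intro: add_pos_nonneg add_nonneg_pos)
  qed
  ultimately have Npos: "N > 0" by linarith
  have "Im Q = Im c * N" unfolding QN by simp
  hence Imc: "Im c = 0" using ImQ Npos by simp
  define r where "r = Re c"
  have cr: "c = complex_of_real r" using Imc unfolding r_def by (simp add: complex_eq_iff)
  have ReE: "mv n A (\<lambda>j. Re (w $ j)) i = r * Re (w $ i)" if "i < n" for i
  proof -
    have "(\<Sum>j<n. complex_of_real (A i j) * w $ j) = complex_of_real r * w $ i" using eq[OF that] cr by simp
    hence "Re (\<Sum>j<n. complex_of_real (A i j) * w $ j) = Re (complex_of_real r * w $ i)" by (rule arg_cong)
    thus ?thesis by (simp add: mv_def)
  qed
  have ImE: "mv n A (\<lambda>j. Im (w $ j)) i = r * Im (w $ i)" if "i < n" for i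
  proof -
    have "(\<Sum>j<n. complex_of_real (A i j) * w $ j) = complex_of_real r * w $ i" using eq[OF that] cr by simp
    hence "Im (\<Sum>j<n. complex_of_real (A i j) * w $ j) = Im (complex_of_real r * w $ i)" by (rule arg_cong)
    thus ?thesis by (simp add: mv_def)
  qed
  show ?thesis
  proof (cases "Re (w $ i0) = 0")
    case True
    hence "Im (w $ i0) \<noteq> 0" using i0 by (simp add: complex_eq_iff)
    thus ?thesis by (intro exI[of _ r] exI[of _ "\<lambda>j. Im (w $ j)"]) (use ImE i0 in auto)
  next
    case False
    thus ?thesis by (intro exI[of _ r] exI[of _ "\<lambda>j. Re (w $ j)"]) (use ReE i0 in auto)
  qed
qed


definition kd :: "nat \<Rightarrow> nat \<Rightarrow> real" where "kd i j = (if i = j then 1 else 0)"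

lemma kd_sym: "kd i j = kd j i" unfolding kd_def by auto
lemma sum_kd_l: "j < (m::nat) \<Longrightarrow> (\<Sum>k<m. kd j k * f k) = f j"
  unfolding kd_def by (rule sum_delta_l')
lemma sum_kd_r: "j < (m::nat) \<Longrightarrow> (\<Sum>k<m. f k * kd k j) = f j"
  unfolding kd_def by (rule sum_delta_r)
lemma sum_kd_l2: "j < (m::nat) \<Longrightarrow> (\<Sum>k<m. kd k j * f k) = f j"
  using sum_kd_l[of j m f] by (simp add: kd_sym)
lemma sum_kd_r2: "j < (m::nat) \<Longrightarrow> (\<Sum>k<m. f k * kd j k) = f j"
  using sum_kd_r[of j m f] by (simp add: kd_sym)

lemma dotp_comm: "dotp n x y = dotp n y x" unfolding dotp_def by (simp add: mult.commute)

lemma dotp_pos: assumes "i < n" "x i \<noteq> 0" shows "dotp n x x > 0"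
proof -
  have "dotp n x x \<ge> x i * x i" unfolding dotp_def
    by (rule member_le_sum[where f="\<lambda>i. x i * x i"]) (use assms in auto)
  moreover have "x i * x i > 0" using assms(2) by (metis not_real_square_gt_zero)
  ultimately show ?thesis by linarith
qed

lemma dotp_zero: assumes "dotp n x x = 0" "i < n" shows "x i = 0"
proof -
  have "\<forall>i\<in>{..<n}. x i * x i = 0" using assms(1) unfolding dotp_def
    by (subst sum_nonneg_eq_0_iff[symmetric]) auto
  thus ?thesis using assms(2) by auto
qed

lemma spectral:
  "symm n A \<Longrightarrow> \<exists>V e. (\<forall>k<n. \<forall>i<n. mv n A (V k) i = e k * V k i) \<and>
      (\<forall>k<n. \<forall>l<n. dotp n (V k) (V l) = kd k l)"
proof (induction n arbitrary: A)
  case 0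
  show ?case by auto
next
  case (Suc n)
  define m where "m = Suc n"
  have nm: "n < m" unfolding m_def by simp
  have symA: "symm m A" using Suc.prems m_def by simp
  obtain r x where x0: "\<exists>i<m. x i \<noteq> 0" and xe: "\<forall>i<m. mv m A x i = r * x i"
    using real_eigvec[of m A] symA unfolding m_def by auto
  obtain i1 where i1: "i1 < m" "x i1 \<noteq> 0" using x0 by blast
  define nx where "nx = sqrt (dotp m x x)"
  have nxpos: "nx > 0" unfolding nx_def using dotp_pos[of i1 m x, OF i1] by simp
  define u where "u = (\<lambda>i. x i / nx)"
  have uu: "dotp m u u = 1"
  proof -
    have "dotp m u u = dotp m x x / nx^2" unfolding u_def dotp_def
      by (simp add: sum_divide_distrib power2_eq_square)
    also have "nx^2 = dotp m x x" unfolding nx_def using dotp_pos[of i1 m x, OF i1] by simp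
    finally show ?thesis using dotp_pos[of i1 m x, OF i1] by simp
  qed
  have ue: "mv m A u i = r * u i" if "i < m" for i
  proof -
    have "mv m A u i = mv m A x i / nx" unfolding mv_def u_def by (simp add: sum_divide_distrib)
    thus ?thesis using xe that unfolding u_def by simp
  qed
  define w where "w = (\<lambda>i. u i - kd i n)"
  define ww where "ww = dotp m w w"
  define c where "c = (if ww = 0 then 0 else 2 / ww)"
  define H where "H = (\<lambda>i j. kd i j - c * w i * w j)"
  have wu: "dotp m w u = 1 - u n"
  proof -
    have "dotp m w u = dotp m u u - (\<Sum>i<m. kd i n * u i)"
      unfolding dotp_def w_def by (simp add: left_diff_distrib sum_subtractf)
    thus ?thesis using uu sum_kd_l2[OF nm, of u] by simp
  qed
  have wweq: "ww = 2 - 2 * u n"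
  proof -
    have "ww = dotp m w u - (\<Sum>i<m. w i * kd i n)"
      unfolding ww_def dotp_def by (simp add: w_def right_diff_distrib sum_subtractf)
    also have "(\<Sum>i<m. w i * kd i n) = w n" by (rule sum_kd_r[OF nm])
    finally show ?thesis using wu unfolding w_def kd_def by simp
  qed
  have cww: "c * c * ww = 2 * c" unfolding c_def by (simp add: power2_eq_square)
  have Hu: "mv m H u i = kd i n" if "i < m" for i
  proof -
    have "mv m H u i = (\<Sum>j<m. kd i j * u j) - (\<Sum>j<m. c * w i * (w j * u j))"
      unfolding mv_def H_def by (simp add: left_diff_distrib right_diff_distrib sum_subtractf mult_ac)
    also have "\<dots> = u i - c * w i * dotp m w u"
      using sum_kd_l[OF that, of u] by (simp add: dotp_def sum_distrib_left)
    finally have eq: "mv m H u i = u i - c * w i * dotp m w u" .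
    show ?thesis
    proof (cases "ww = 0")
      case True
      hence "w i = 0" using dotp_zero[of m w i] that unfolding ww_def by simp
      thus ?thesis using eq True unfolding c_def w_def by simp
    next
      case False
      hence "c * dotp m w u = 1" unfolding c_def using wu wweq by (simp add: field_simps)
      hence "mv m H u i = u i - w i" using eq by (simp add: mult_ac)
      thus ?thesis unfolding w_def by simp
    qed
  qed
  have HH: "mm m H H i j = kd i j" if "i < m" "j < m" for i j
  proof -
    have "mm m H H i j = (\<Sum>k<m. kd i k * kd k j) - (\<Sum>k<m. kd i k * (c * w k * w j))
        - (\<Sum>k<m. (c * w i * w k) * kd k j) + (\<Sum>k<m. c * c * w i * w j * (w k * w k))"
      unfolding mm_def H_def by (simp add: algebra_simps sum.distrib sum_subtractf)
    also have "\<dots> = kd i j - c * w i * w j - c * w i * w j + c * c * w i * w j * ww"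
      using sum_kd_l[OF that(1), of "\<lambda>k. kd k j"] sum_kd_l[OF that(1), of "\<lambda>k. c * w k * w j"]
        sum_kd_r[OF that(2), of "\<lambda>k. c * w i * w k"]
      by (simp add: ww_def dotp_def sum_distrib_left)
    also have "\<dots> = kd i j"
    proof -
      have "c * c * w i * w j * ww = (c * c * ww) * (w i * w j)" by (simp add: mult_ac)
      also have "\<dots> = 2 * (c * w i * w j)" unfolding cww by (simp add: mult_ac)
      finally have e: "c * c * w i * w j * ww = 2 * (c * w i * w j)" .
      show ?thesis by (simp only: e)
    qed
    finally show ?thesis .
  qed
  have Hsym: "symm m H" unfolding symm_def H_def by (auto simp: kd_sym mult_ac)
  have HHz: "mv m H (mv m H z) i = z i" if "i < m" for z i
  proof -
    have "mv m H (mv m H z) i = mv m (mm m H H) z i" by (simp add: mv_mm)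
    also have "\<dots> = (\<Sum>j<m. kd i j * z j)" unfolding mv_def
      by (intro sum.cong refl) (simp add: HH that)
    also have "\<dots> = z i" by (rule sum_kd_l[OF that])
    finally show ?thesis .
  qed
  have Hn: "H i n = u i" if "i < m" for i
  proof -
    have "u i = mv m H (mv m H u) i" using HHz[OF that] by simp
    also have "\<dots> = (\<Sum>j<m. H i j * kd j n)" unfolding mv_def[of m H "mv m H u"]
      by (intro sum.cong refl) (simp add: Hu)
    also have "\<dots> = H i n" by (rule sum_kd_r[OF nm])
    finally show ?thesis by simp
  qed
  define A2 where "A2 = mm m H (mm m A H)"
  have A2dot: "A2 i j = dotp m (\<lambda>k. H k i) (mv m A (\<lambda>l. H l j))" if "i < m" for i j
    unfolding A2_def mm_def dotp_def mv_def
    using Hsym that unfolding symm_def by (intro sum.cong refl) auto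
  have A2sym: "symm m A2" unfolding symm_def
  proof (intro allI impI)
    fix i j assume ij: "i < m" "j < m"
    have "A2 i j = dotp m (\<lambda>k. H k i) (mv m A (\<lambda>l. H l j))" by (rule A2dot[OF ij(1)])
    also have "\<dots> = dotp m (mv m A (\<lambda>k. H k i)) (\<lambda>l. H l j)" by (rule dotp_mv_symm[OF symA, symmetric])
    also have "\<dots> = dotp m (\<lambda>l. H l j) (mv m A (\<lambda>k. H k i))" by (rule dotp_comm)
    also have "\<dots> = A2 j i" by (rule A2dot[OF ij(2), symmetric])
    finally show "A2 i j = A2 j i" .
  qed
  have A2n: "A2 i n = r * kd i n" if "i < m" for i
  proof -
    have "A2 i n = dotp m (\<lambda>k. H k i) (mv m A (\<lambda>l. H l n))" by (rule A2dot[OF that])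
    also have "mv m A (\<lambda>l. H l n) = mv m A u" by (rule mv_cong) (simp add: Hn)
    also have "dotp m (\<lambda>k. H k i) (mv m A u) = dotp m (\<lambda>k. H k i) (\<lambda>k. r * u k)"
      by (rule dotp_cong) (simp add: ue)
    also have "\<dots> = r * mv m H u i" unfolding dotp_def mv_def using Hsym that unfolding symm_def
      by (simp add: sum_distrib_left mult_ac)
    also have "\<dots> = r * kd i n" using Hu[OF that] by simp
    finally show ?thesis .
  qed
  have A2n': "A2 n i = 0" if "i < n" for i
    using A2sym A2n[of i] that nm unfolding symm_def kd_def by auto
  have "symm n A2" using A2sym nm unfolding symm_def by auto
  from Suc.IH[OF this] obtain V' e' where
    V'e: "\<forall>k<n. \<forall>i<n. mv n A2 (V' k) i = e' k * V' k i" and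
    V'o: "\<forall>k<n. \<forall>l<n. dotp n (V' k) (V' l) = kd k l" by blast
  define W where "W = (\<lambda>k j. if k < n then (if j < n then V' k j else 0) else kd j n)"
  define e where "e = (\<lambda>k. if k < n then e' k else r)"
  have sumS: "(\<Sum>j<m. f j) = (\<Sum>j<n. f j) + f n" for f :: "nat \<Rightarrow> real"
    unfolding m_def by simp
  have We: "mv m A2 (W k) i = e k * W k i" if "k < m" "i < m" for k i
  proof (cases "k < n")
    case True
    have "mv m A2 (W k) i = (\<Sum>j<n. A2 i j * V' k j)"
      unfolding mv_def sumS using True by (simp add: W_def)
    also have "\<dots> = mv n A2 (V' k) i" unfolding mv_def ..
    finally have eq: "mv m A2 (W k) i = mv n A2 (V' k) i" .
    show ?thesis
    proof (cases "i < n")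
      case True2: True
      thus ?thesis using eq V'e True unfolding W_def e_def by simp
    next
      case False
      hence "i = n" using that unfolding m_def by simp
      thus ?thesis using eq True A2n' unfolding W_def e_def mv_def by simp
    qed
  next
    case False
    hence kn: "k = n" using that unfolding m_def by simp
    have "mv m A2 (W k) i = (\<Sum>j<n. A2 i j * kd j n) + A2 i n * kd n n"
      unfolding mv_def sumS using kn by (simp add: W_def)
    also have "(\<Sum>j<n. A2 i j * kd j n) = 0" by (intro sum.neutral) (auto simp: kd_def)
    finally show ?thesis using A2n[OF that(2)] kn unfolding W_def e_def by (simp add: kd_def kd_sym)
  qed
  have Wo: "dotp m (W k) (W l) = kd k l" if "k < m" "l < m" for k l
  proof -
    have z: "(\<Sum>j<n. f j * kd j n) = 0" "(\<Sum>j<n. kd j n * f j) = 0" for f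
      by (auto intro!: sum.neutral simp: kd_def)
    have "dotp m (W k) (W l) = (\<Sum>j<n. W k j * W l j) + W k n * W l n"
      unfolding dotp_def sumS ..
    moreover have "k < n \<or> k = n" "l < n \<or> l = n" using that unfolding m_def by auto
    ultimately show ?thesis using V'o z[of "\<lambda>j. V' k j"] z[of "\<lambda>j. V' l j"] z[of "\<lambda>j. kd j n"]
      unfolding W_def by (auto simp: dotp_def kd_def)
  qed
  define V where "V = (\<lambda>k. mv m H (W k))"
  have Ve: "mv m A (V k) i = e k * V k i" if "k < m" "i < m" for k i
  proof -
    have "mv m A (V k) i = mv m H (mv m H (mv m A (V k))) i" using HHz[OF that(2)] by simp
    also have "mv m H (mv m A (V k)) = mv m A2 (W k)" unfolding V_def A2_def by (simp add: mv_mm)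
    also have "mv m H (mv m A2 (W k)) = mv m H (\<lambda>j. e k * W k j)"
      by (rule mv_cong) (simp add: We that)
    also have "\<dots> i = e k * V k i" unfolding V_def mv_def by (simp add: sum_distrib_left mult_ac)
    finally show ?thesis .
  qed
  have Vo: "dotp m (V k) (V l) = kd k l" if "k < m" "l < m" for k l
  proof -
    have "dotp m (V k) (V l) = dotp m (W k) (mv m H (mv m H (W l)))"
      unfolding V_def by (rule dotp_mv_symm[OF Hsym])
    also have "\<dots> = dotp m (W k) (W l)" by (rule dotp_cong) (simp add: HHz)
    finally show ?thesis using Wo[OF that] by simp
  qed
  show ?case using Ve Vo unfolding m_def by blast
qed


lemma complete_basis:
  assumes o: "\<forall>k<n. \<forall>l<n. dotp n (V k) (V l) = kd k l"
  shows "\<forall>i<n. \<forall>j<n. (\<Sum>k<n. V k i * V k j) = kd i j"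
proof -
  define P where "P = mat n n (\<lambda>(k,i). V k i)"
  have P: "P \<in> carrier_mat n n" unfolding P_def by simp
  have PT: "transpose_mat P \<in> carrier_mat n n" using P by simp
  have "P * transpose_mat P = 1\<^sub>m n"
  proof (rule eq_matI)
    fix k l assume kl: "k < dim_row (1\<^sub>m n)" "l < dim_col (1\<^sub>m n)"
    hence "(P * transpose_mat P) $$ (k, l) = dotp n (V k) (V l)"
      unfolding P_def by (simp add: scalar_prod_def dotp_def lessThan_atLeast0)
    thus "(P * transpose_mat P) $$ (k, l) = 1\<^sub>m n $$ (k, l)" using o kl by (simp add: kd_def)
  qed (use P in auto)
  hence TP: "transpose_mat P * P = 1\<^sub>m n" by (rule mat_mult_left_right_inverse[OF P PT])
  show ?thesis
  proof (intro allI impI)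
    fix i j assume ij: "i < n" "j < n"
    have "(transpose_mat P * P) $$ (i, j) = (\<Sum>k<n. V k i * V k j)"
      using ij unfolding P_def by (simp add: scalar_prod_def lessThan_atLeast0)
    thus "(\<Sum>k<n. V k i * V k j) = kd i j" using TP ij by (simp add: kd_def)
  qed
qed

lemma decomp:
  assumes e: "\<forall>k<n. \<forall>i<n. mv n M (V k) i = e k * V k i"
    and c: "\<forall>i<n. \<forall>j<n. (\<Sum>k<n. V k i * V k j) = kd i j"
    and ij: "i < n" "j < n"
  shows "M i j = (\<Sum>k<n. e k * V k i * V k j)"
proof -
  have "M i j = (\<Sum>l<n. M i l * kd l j)" using sum_kd_r[OF ij(2)] by simp
  also have "\<dots> = (\<Sum>l<n. \<Sum>k<n. M i l * (V k l * V k j))"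
    using c ij by (intro sum.cong refl) (simp add: sum_distrib_left[symmetric])
  also have "\<dots> = (\<Sum>k<n. \<Sum>l<n. M i l * (V k l * V k j))" by (rule sum.swap)
  also have "\<dots> = (\<Sum>k<n. mv n M (V k) i * V k j)"
    unfolding mv_def by (simp add: sum_distrib_right mult.assoc)
  also have "\<dots> = (\<Sum>k<n. e k * V k i * V k j)" using e ij by simp
  finally show ?thesis .
qed

lemma proots_lin: "proots (\<Prod>a\<leftarrow>xs. [:- a, 1:]) = mset (xs :: real list)"
proof (induction xs)
  case Nil
  then show ?case by simp
next
  case (Cons a xs)
  have "\<forall>a. (0::real poly) \<noteq> [:- a, 1:]" by simp
  hence nz: "(\<Prod>a\<leftarrow>xs. [:- a, 1:]) \<noteq> (0 :: real poly)"
    by (auto simp: prod_list_zero_iff)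
  have eq: "(\<Prod>a\<leftarrow>a # xs. [:- a, 1:]) = [:- a, 1:] * (\<Prod>a\<leftarrow>xs. [:- a, 1:])" by simp
  have pm: "proots ([:- a, 1:] * (\<Prod>a\<leftarrow>xs. [:- a, 1:])) = proots [:- a, 1:] + proots (\<Prod>a\<leftarrow>xs. [:- a, 1:])"
    by (rule proots_mult) (use nz in auto)
  have pl: "proots [:- a, 1:] = {#a#}" using proots_linear_factor[of "- a"] by simp
  show ?case unfolding eq pm pl Cons.IH by simp
qed

lemma char_poly_decomp:
  fixes Mat :: "real mat"
  assumes Mat: "Mat \<in> carrier_mat n n"
    and o: "\<forall>k<n. \<forall>l<n. dotp n (V k) (V l) = kd k l"
    and c: "\<forall>i<n. \<forall>j<n. (\<Sum>k<n. V k i * V k j) = kd i j"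
    and ent: "\<forall>i<n. \<forall>j<n. Mat $$ (i,j) = (\<Sum>k<n. e k * V k i * V k j)"
  shows "char_poly Mat = (\<Prod>a\<leftarrow>map e [0..<n]. [:- a, 1:])"
proof -
  define P where "P = mat n n (\<lambda>(k,i). V k i)"
  define Q where "Q = mat n n (\<lambda>(i,k). V k i)"
  define D where "D = mat n n (\<lambda>(i,j). if i = j then e i else 0)"
  have P: "P \<in> carrier_mat n n" and Q: "Q \<in> carrier_mat n n" and D: "D \<in> carrier_mat n n"
    unfolding P_def Q_def D_def by auto
  have PQ: "P * Q = 1\<^sub>m n"
    by (rule eq_matI) (use o in \<open>auto simp: P_def Q_def scalar_prod_def dotp_def lessThan_atLeast0 kd_def\<close>)
  have QP: "Q * P = 1\<^sub>m n"
    by (rule eq_matI) (use c in \<open>auto simp: P_def Q_def scalar_prod_def lessThan_atLeast0 kd_def\<close>)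
  have QD: "Q * D = mat n n (\<lambda>(i,k). V k i * e k)"
  proof (rule eq_matI)
    fix i k assume ik: "i < dim_row (mat n n (\<lambda>(i,k). V k i * e k))" "k < dim_col (mat n n (\<lambda>(i,k). V k i * e k))"
    have "(Q * D) $$ (i,k) = (\<Sum>l<n. V l i * (e l * kd l k))"
      using ik unfolding Q_def D_def by (auto simp: scalar_prod_def lessThan_atLeast0 kd_def intro!: sum.cong)
    also have "\<dots> = V k i * e k" using sum_kd_r[of k n "\<lambda>l. V l i * e l"] ik by (simp add: mult_ac)
    finally show "(Q * D) $$ (i,k) = mat n n (\<lambda>(i,k). V k i * e k) $$ (i,k)" using ik by simp
  qed (auto simp: Q_def D_def)
  have MQDP: "Mat = Q * D * P"
  proof (rule eq_matI)
    fix i j assume ij: "i < dim_row (Q * D * P)" "j < dim_col (Q * D * P)"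
    hence ij': "i < n" "j < n" using Q P by auto
    have "(Q * D * P) $$ (i,j) = (\<Sum>k<n. V k i * e k * V k j)"
      using ij' unfolding QD P_def by (simp add: scalar_prod_def lessThan_atLeast0)
    thus "Mat $$ (i,j) = (Q * D * P) $$ (i,j)" using ent ij' by (simp add: mult_ac)
  qed (use Mat Q P in auto)
  have "similar_mat_wit Mat D Q P"
    unfolding similar_mat_wit_def Let_def using Mat P Q D PQ QP MQDP by auto
  hence "similar_mat Mat D" unfolding similar_mat_def by blast
  hence "char_poly Mat = char_poly D" by (rule char_poly_similar)
  also have "upper_triangular D" unfolding upper_triangular_def D_def by auto
  hence "char_poly D = (\<Prod>a\<leftarrow>diag_mat D. [:- a, 1:])" by (rule char_poly_upper_triangular[OF D])
  also have "diag_mat D = map e [0..<n]" unfolding diag_mat_def D_def by auto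
  finally show ?thesis .
qed

lemma eig_order:
  fixes e :: "nat \<Rightarrow> real"
  assumes n: "n > 0"
  defines "L \<equiv> rev (sorted_list_of_multiset (mset (map e [0..<n])))"
  shows "\<exists>k0<n. \<forall>k<n. k \<noteq> k0 \<longrightarrow> \<bar>e k\<bar> \<le> max \<bar>L ! 1\<bar> \<bar>L ! (n - 1)\<bar>"
proof -
  define s where "s = sort (map e [0..<n])"
  have L: "L = rev s" unfolding L_def s_def by (simp only: sorted_list_of_multiset_mset)
  have ls: "length s = n" unfolding s_def by simp
  have ss: "sorted s" unfolding s_def by simp
  have "mset s = mset (map e [0..<n])" unfolding s_def by simp
  then obtain p where p: "p permutes {..<length (map e [0..<n])}" "permute_list p (map e [0..<n]) = s"
    by (rule mset_eq_permutation)
  have pn: "p permutes {..<n}" using p(1) by simp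
  have snth: "s ! i = e (p i)" if "i < n" for i
  proof -
    have "s ! i = permute_list p (map e [0..<n]) ! i" using p(2) by simp
    also have "\<dots> = map e [0..<n] ! (p i)" using that p(1) by (simp add: permute_list_nth)
    also have "p i < n" using permutes_in_image[OF pn] that by simp
    hence "map e [0..<n] ! (p i) = e (p i)" by simp
    finally show ?thesis .
  qed
  define k0 where "k0 = p (n - 1)"
  have k0: "k0 < n" unfolding k0_def using permutes_in_image[OF pn] n by simp
  have "\<forall>k<n. k \<noteq> k0 \<longrightarrow> \<bar>e k\<bar> \<le> max \<bar>L ! 1\<bar> \<bar>L ! (n - 1)\<bar>"
  proof (intro allI impI)
    fix k assume k: "k < n" "k \<noteq> k0"
    have "k \<in> p ` {..<n}" using permutes_image[OF pn] k by simp
    then obtain i where i: "i < n" "p i = k" by auto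
    have "i \<noteq> n - 1" using i k unfolding k0_def by auto
    hence i2: "i \<le> n - 2" "n \<ge> 2" using i by auto
    have "s ! 0 \<le> s ! i" using ss i ls by (intro sorted_nth_mono) auto
    moreover have "s ! i \<le> s ! (n - 2)" using ss i2 ls n by (intro sorted_nth_mono) auto
    moreover have "L ! 1 = s ! (n - 2)" using L ls i2 by (simp add: rev_nth numeral_2_eq_2)
    moreover have "L ! (n - 1) = s ! 0" using L ls n by (simp add: rev_nth)
    moreover have "s ! i = e k" using snth[OF i(1)] i by simp
    ultimately show "\<bar>e k\<bar> \<le> max \<bar>L ! 1\<bar> \<bar>L ! (n - 1)\<bar>" by auto
  qed
  thus ?thesis using k0 by blast
qed

definition adjf :: "(nat \<Rightarrow> nat \<Rightarrow> bool) \<Rightarrow> nat \<Rightarrow> nat \<Rightarrow> real" where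
  "adjf E i j = (if E i j then 1 else 0)"

lemma spec_decomp:
  assumes g: "is_graph n E" and n: "n > 0"
  shows "\<exists>V e k0. k0 < n \<and> (\<forall>k<n. \<forall>l<n. dotp n (V k) (V l) = kd k l) \<and>
     (\<forall>i<n. \<forall>j<n. (\<Sum>k<n. V k i * V k j) = kd i j) \<and>
     (\<forall>i<n. \<forall>j<n. adjf E i j = (\<Sum>k<n. e k * V k i * V k j)) \<and>
     (\<forall>k<n. \<forall>i<n. mv n (adjf E) (V k) i = e k * V k i) \<and>
     (\<forall>k<n. k \<noteq> k0 \<longrightarrow> \<bar>e k\<bar> \<le> spec_lambda n E)"
proof -
  have "symm n (adjf E)" using g unfolding symm_def adjf_def is_graph_def by auto
  from spectral[OF this] obtain V e where
    ev: "\<forall>k<n. \<forall>i<n. mv n (adjf E) (V k) i = e k * V k i" and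
    o: "\<forall>k<n. \<forall>l<n. dotp n (V k) (V l) = kd k l" by blast
  have c: "\<forall>i<n. \<forall>j<n. (\<Sum>k<n. V k i * V k j) = kd i j" by (rule complete_basis[OF o])
  have dec: "\<forall>i<n. \<forall>j<n. adjf E i j = (\<Sum>k<n. e k * V k i * V k j)"
    using decomp[OF ev c] by blast
  have cp: "char_poly (adj_mat n E) = (\<Prod>a\<leftarrow>map e [0..<n]. [:- a, 1:])"
    by (rule char_poly_decomp[OF _ o c]) (use dec in \<open>auto simp: adj_mat_def adjf_def\<close>)
  have "adj_eigs n E = rev (sorted_list_of_multiset (mset (map e [0..<n])))"
    unfolding adj_eigs_def cp proots_lin by (rule refl)
  from eig_order[OF n, of e, folded this] obtain k0 where
    "k0 < n" "\<forall>k<n. k \<noteq> k0 \<longrightarrow> \<bar>e k\<bar> \<le> max \<bar>adj_eigs n E ! 1\<bar> \<bar>adj_eigs n E ! (n - 1)\<bar>" by blast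
  thus ?thesis using o c dec ev unfolding spec_lambda_def by blast
qed


lemma cs_sum:
  fixes f g :: "nat \<Rightarrow> real"
  shows "(\<Sum>i\<in>S. f i * g i)^2 \<le> (\<Sum>i\<in>S. (f i)^2) * (\<Sum>i\<in>S. (g i)^2)"
proof (cases "finite S")
  case False thus ?thesis by simp
next
  case True
  have e1: "(\<Sum>i\<in>S. \<Sum>j\<in>S. (f i * g j - f j * g i)^2) =
      (\<Sum>i\<in>S. \<Sum>j\<in>S. (f i)^2 * (g j)^2) + (\<Sum>i\<in>S. \<Sum>j\<in>S. (f j)^2 * (g i)^2)
      - 2 * (\<Sum>i\<in>S. \<Sum>j\<in>S. (f i * g i) * (f j * g j))"
    by (simp add: power2_eq_square algebra_simps sum.distrib sum_subtractf sum_distrib_left)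
  have e2: "(\<Sum>i\<in>S. \<Sum>j\<in>S. (f i)^2 * (g j)^2) = (\<Sum>i\<in>S. (f i)^2) * (\<Sum>i\<in>S. (g i)^2)"
    by (simp add: sum_product)
  have e3: "(\<Sum>i\<in>S. \<Sum>j\<in>S. (f j)^2 * (g i)^2) = (\<Sum>i\<in>S. (f i)^2) * (\<Sum>i\<in>S. (g i)^2)"
    by (subst sum.swap) (simp add: sum_product)
  have e4: "(\<Sum>i\<in>S. \<Sum>j\<in>S. (f i * g i) * (f j * g j)) = (\<Sum>i\<in>S. f i * g i)^2"
    by (simp add: power2_eq_square sum_product)
  have "0 \<le> (\<Sum>i\<in>S. \<Sum>j\<in>S. (f i * g j - f j * g i)^2)" by (intro sum_nonneg) auto
  thus ?thesis unfolding e1 e2 e3 e4 by linarith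
qed

lemma cs_sqrt:
  fixes a b :: "nat \<Rightarrow> real"
  shows "(\<Sum>i\<in>S. \<bar>a i\<bar> * \<bar>b i\<bar>) \<le> sqrt (\<Sum>i\<in>S. (a i)^2) * sqrt (\<Sum>i\<in>S. (b i)^2)"
proof -
  have "(\<Sum>i\<in>S. \<bar>a i\<bar> * \<bar>b i\<bar>)^2 \<le> (\<Sum>i\<in>S. \<bar>a i\<bar>^2) * (\<Sum>i\<in>S. \<bar>b i\<bar>^2)"
    by (rule cs_sum)
  hence "(\<Sum>i\<in>S. \<bar>a i\<bar> * \<bar>b i\<bar>)^2 \<le> (\<Sum>i\<in>S. (a i)^2) * (\<Sum>i\<in>S. (b i)^2)" by simp
  hence "sqrt ((\<Sum>i\<in>S. \<bar>a i\<bar> * \<bar>b i\<bar>)^2) \<le> sqrt ((\<Sum>i\<in>S. (a i)^2) * (\<Sum>i\<in>S. (b i)^2))"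
    by (rule real_sqrt_le_mono)
  moreover have "(\<Sum>i\<in>S. \<bar>a i\<bar> * \<bar>b i\<bar>) \<ge> 0" by (intro sum_nonneg) auto
  ultimately show ?thesis by (simp add: real_sqrt_mult)
qed

lemma bil:
  "(\<Sum>k<n. cf k * dotp n x (V k) * dotp n y (V k)) = (\<Sum>i<n. \<Sum>j<n. x i * y j * (\<Sum>k<n. cf k * V k i * V k j))"
proof -
  have "(\<Sum>k<n. cf k * dotp n x (V k) * dotp n y (V k)) = (\<Sum>k<n. \<Sum>i<n. \<Sum>j<n. x i * y j * (cf k * V k i * V k j))"
    unfolding dotp_def by (simp add: sum_product sum_distrib_left mult_ac)
  also have "\<dots> = (\<Sum>i<n. \<Sum>k<n. \<Sum>j<n. x i * y j * (cf k * V k i * V k j))" by (rule sum.swap)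
  also have "\<dots> = (\<Sum>i<n. \<Sum>j<n. \<Sum>k<n. x i * y j * (cf k * V k i * V k j))" by (rule sum.cong[OF refl]) (rule sum.swap)
  also have "\<dots> = (\<Sum>i<n. \<Sum>j<n. x i * y j * (\<Sum>k<n. cf k * V k i * V k j))" by (simp add: sum_distrib_left)
  finally show ?thesis .
qed

lemma mixing:
  assumes c: "\<forall>i<n. \<forall>j<n. (\<Sum>k<n. V k i * V k j) = kd i j"
    and dec: "\<forall>i<n. \<forall>j<n. M i j = (\<Sum>k<n. e k * V k i * V k j)"
    and k0: "k0 < n" and lam: "\<forall>k<n. k \<noteq> k0 \<longrightarrow> \<bar>e k\<bar> \<le> lam" and lam0: "lam \<ge> 0"
  shows "\<bar>dotp n x (mv n M y) - e k0 * dotp n x (V k0) * dotp n y (V k0)\<bar>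
           \<le> lam * sqrt (dotp n x x) * sqrt (dotp n y y)"
proof -
  have pars: "(\<Sum>k<n. (dotp n z (V k))^2) = dotp n z z" for z
  proof -
    have "(\<Sum>k<n. (dotp n z (V k))^2) = (\<Sum>k<n. 1 * dotp n z (V k) * dotp n z (V k))"
      by (simp add: power2_eq_square)
    also have "\<dots> = (\<Sum>i<n. \<Sum>j<n. z i * z j * (\<Sum>k<n. 1 * V k i * V k j))" by (rule bil)
    also have "\<dots> = (\<Sum>i<n. \<Sum>j<n. z i * z j * kd i j)" using c by (intro sum.cong refl) simp
    also have "\<dots> = (\<Sum>i<n. z i * z i)" by (intro sum.cong refl) (simp add: sum_kd_r2 mult.assoc sum_distrib_left[symmetric])
    finally show ?thesis unfolding dotp_def .
  qed
  have main: "dotp n x (mv n M y) = (\<Sum>k<n. e k * dotp n x (V k) * dotp n y (V k))"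
  proof -
    have "dotp n x (mv n M y) = (\<Sum>i<n. \<Sum>j<n. x i * y j * M i j)"
      unfolding dotp_def mv_def by (simp add: sum_distrib_left mult_ac)
    also have "\<dots> = (\<Sum>i<n. \<Sum>j<n. x i * y j * (\<Sum>k<n. e k * V k i * V k j))"
      using dec by (intro sum.cong refl) simp
    also have "\<dots> = (\<Sum>k<n. e k * dotp n x (V k) * dotp n y (V k))" by (rule bil[symmetric])
    finally show ?thesis .
  qed
  define a where "a = (\<lambda>k. dotp n x (V k))"
  define b where "b = (\<lambda>k. dotp n y (V k))"
  have split: "(\<Sum>k<n. e k * a k * b k) = e k0 * a k0 * b k0 + (\<Sum>k\<in>{..<n} - {k0}. e k * a k * b k)"
    using k0 by (subst sum.remove[of _ k0]) auto
  have "\<bar>\<Sum>k\<in>{..<n} - {k0}. e k * a k * b k\<bar> \<le> (\<Sum>k\<in>{..<n} - {k0}. \<bar>e k * a k * b k\<bar>)"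
    by (rule sum_abs)
  also have "\<dots> \<le> (\<Sum>k\<in>{..<n} - {k0}. lam * (\<bar>a k\<bar> * \<bar>b k\<bar>))"
  proof (rule sum_mono)
    fix k assume "k \<in> {..<n} - {k0}"
    hence "\<bar>e k\<bar> \<le> lam" using lam by auto
    thus "\<bar>e k * a k * b k\<bar> \<le> lam * (\<bar>a k\<bar> * \<bar>b k\<bar>)"
      by (simp add: abs_mult mult_right_mono mult.assoc)
  qed
  also have "\<dots> \<le> (\<Sum>k<n. lam * (\<bar>a k\<bar> * \<bar>b k\<bar>))"
    by (rule sum_mono2) (auto intro!: mult_nonneg_nonneg lam0)
  also have "\<dots> = lam * (\<Sum>k<n. \<bar>a k\<bar> * \<bar>b k\<bar>)" by (simp add: sum_distrib_left)
  also have "\<dots> \<le> lam * (sqrt (\<Sum>k<n. (a k)^2) * sqrt (\<Sum>k<n. (b k)^2))"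
    by (rule mult_left_mono[OF cs_sqrt lam0])
  also have "\<dots> = lam * sqrt (dotp n x x) * sqrt (dotp n y y)"
    unfolding a_def b_def pars by simp
  finally show ?thesis using main split unfolding a_def b_def by simp
qed


lemma final_alg:
  fixes eta D sig alp n rho l e kap :: real
  assumes D: "D > 0" and n: "n > 0" and s0: "0 \<le> sig" and sn: "sig \<le> n" and a0: "0 \<le> alp" and an: "alp \<le> n"
    and rho: "rho \<ge> 0" and l: "l \<ge> 0" and eta: "eta > 0"
    and eta1: "eta \<ge> 2 * alp / n" and eta2: "eta^2 \<ge> kap" and kap: "kap = 2 * rho + rho^2 + l / D"
    and lower: "eta * D * sig \<le> e"
    and upper: "e \<le> D * ((sig / sqrt n + sqrt sig * rho) * (alp / sqrt n + sqrt alp * rho)) + l * sqrt sig * sqrt alp"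
  shows "sig \<le> 4 * kap * alp"
proof -
  have kap0: "kap \<ge> 0" using kap rho l D by simp
  have sqn: "sqrt n > 0" using n by simp
  have ssig: "sig / sqrt n \<le> sqrt sig"
  proof -
    have "sqrt sig \<le> sqrt n" using sn by simp
    hence "sqrt sig * sqrt sig \<le> sqrt sig * sqrt n" using s0 by (intro mult_left_mono) auto
    hence "sig \<le> sqrt sig * sqrt n" using s0 by simp
    thus ?thesis using sqn by (simp add: divide_le_eq)
  qed
  have salp: "alp / sqrt n \<le> sqrt alp"
  proof -
    have "sqrt alp \<le> sqrt n" using an by simp
    hence "sqrt alp * sqrt alp \<le> sqrt alp * sqrt n" using a0 by (intro mult_left_mono) auto
    hence "alp \<le> sqrt alp * sqrt n" using a0 by simp
    thus ?thesis using sqn by (simp add: divide_le_eq)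
  qed
  define P where "P = sqrt sig * sqrt alp"
  have P0: "P \<ge> 0" unfolding P_def using s0 a0 by simp
  have t1: "sig / sqrt n * (sqrt alp * rho) \<le> P * rho"
  proof -
    have "sig / sqrt n * (sqrt alp * rho) \<le> sqrt sig * (sqrt alp * rho)"
      using ssig rho a0 by (intro mult_right_mono) auto
    thus ?thesis unfolding P_def by (simp add: mult_ac)
  qed
  have t2: "sqrt sig * rho * (alp / sqrt n) \<le> P * rho"
  proof -
    have "sqrt sig * rho * (alp / sqrt n) \<le> sqrt sig * rho * sqrt alp"
      using salp rho s0 by (intro mult_left_mono) auto
    thus ?thesis unfolding P_def by (simp add: mult_ac)
  qed
  have t3: "sig / sqrt n * (alp / sqrt n) = sig * alp / n" using n by (simp add: power2_eq_square[symmetric])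
  have t4: "sqrt sig * rho * (sqrt alp * rho) = P * rho^2" unfolding P_def by (simp add: power2_eq_square mult_ac)
  have "(sig / sqrt n + sqrt sig * rho) * (alp / sqrt n + sqrt alp * rho)
      = sig / sqrt n * (alp / sqrt n) + sig / sqrt n * (sqrt alp * rho) + sqrt sig * rho * (alp / sqrt n)
        + sqrt sig * rho * (sqrt alp * rho)" by (simp add: algebra_simps)
  also have "\<dots> \<le> sig * alp / n + P * (2 * rho + rho^2)"
  proof -
    have "P * (2 * rho + rho^2) = 2 * (P * rho) + P * rho^2" by (simp add: algebra_simps)
    thus ?thesis unfolding t3 t4 using t1 t2 by linarith
  qed
  finally have prod: "(sig / sqrt n + sqrt sig * rho) * (alp / sqrt n + sqrt alp * rho) \<le> sig * alp / n + P * (2 * rho + rho^2)" .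
  have "eta * D * sig \<le> D * (sig * alp / n + P * (2 * rho + rho^2)) + l * P"
  proof -
    have m: "D * ((sig / sqrt n + sqrt sig * rho) * (alp / sqrt n + sqrt alp * rho)) \<le> D * (sig * alp / n + P * (2 * rho + rho^2))"
      using prod D by (intro mult_left_mono) auto
    have "l * sqrt sig * sqrt alp = l * P" unfolding P_def by simp
    thus ?thesis using lower upper m by linarith
  qed
  also have "\<dots> = D * (sig * alp / n + P * kap)" unfolding kap using D by (simp add: field_simps)
  finally have "D * (eta * sig) \<le> D * (sig * alp / n + P * kap)" by (simp add: mult_ac)
  hence ineq: "eta * sig \<le> sig * alp / n + P * kap" using D by simp
  have "sig * alp / n \<le> sig * (eta / 2)"
  proof -
    have "alp / n \<le> eta / 2" using eta1 by (simp add: mult.commute)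
    hence "sig * (alp / n) \<le> sig * (eta / 2)" using s0 by (rule mult_left_mono)
    moreover have "sig * alp / n = sig * (alp / n)" by simp
    ultimately show ?thesis by linarith
  qed
  moreover have "sig * (eta / 2) = eta * sig / 2" by simp
  ultimately have half: "eta * sig / 2 \<le> P * kap" using ineq by linarith
  show ?thesis
  proof (cases "sig = 0")
    case True thus ?thesis using kap0 a0 by simp
  next
    case False
    hence sp: "sqrt sig > 0" using s0 by simp
    have ss: "sqrt sig * sqrt sig = sig" using s0 by simp
    have "sqrt sig * (eta * sqrt sig / 2) = eta * sig / 2" using ss by (simp add: field_simps)
    moreover have "sqrt sig * (kap * sqrt alp) = P * kap" unfolding P_def by (simp add: field_simps)
    ultimately have "sqrt sig * (eta * sqrt sig / 2) \<le> sqrt sig * (kap * sqrt alp)" using half by linarith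
    hence h: "eta * sqrt sig / 2 \<le> kap * sqrt alp" using sp by (simp only: mult_le_cancel_left_pos)
    have "0 \<le> eta * sqrt sig / 2" using eta s0 by simp
    hence "(eta * sqrt sig / 2)^2 \<le> (kap * sqrt alp)^2"
      by (rule power_mono[OF h])
    moreover have "(eta * sqrt sig / 2)^2 = eta^2 * sig / 4" using s0 by (simp add: power_mult_distrib power_divide)
    moreover have "(kap * sqrt alp)^2 = kap^2 * alp" using a0 by (simp add: power_mult_distrib)
    ultimately have h2: "eta^2 * sig \<le> 4 * kap^2 * alp" by simp
    have "kap * sig \<le> eta^2 * sig" using eta2 s0 by (simp add: mult_right_mono)
    hence h3: "kap * sig \<le> 4 * kap^2 * alp" using h2 by linarith
    show ?thesis
    proof (cases "kap = 0")
      case True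
      hence "eta^2 * sig \<le> 0" using h2 by simp
      moreover have "eta^2 * sig > 0" using eta s0 False by simp
      ultimately show ?thesis by simp
    next
      case False
      hence "kap > 0" using kap0 by simp
      hence "kap * sig \<le> kap * (4 * kap * alp)" using h3 by (simp add: power2_eq_square mult_ac)
      thus ?thesis using \<open>kap > 0\<close> by simp
    qed
  qed
qed


definition ind :: "nat set \<Rightarrow> nat \<Rightarrow> real" where "ind S = (\<lambda>i. if i \<in> S then 1 else 0)"

definition thetaf :: "nat \<Rightarrow> (nat \<Rightarrow> nat \<Rightarrow> bool) \<Rightarrow> real" where
  "thetaf n E = 1 - (real (min_deg n E) - spec_lambda n E) / real (max_deg n E)"
definition kapf :: "nat \<Rightarrow> (nat \<Rightarrow> nat \<Rightarrow> bool) \<Rightarrow> real" where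
  "kapf n E = 2 * sqrt (thetaf n E) + thetaf n E + spec_lambda n E / real (max_deg n E)"

lemma sum_ind_card: "finite X \<Longrightarrow> (\<Sum>j\<in>X. (if P j then 1 else 0::real)) = real (card {j\<in>X. P j})"
  by (simp add: sum.inter_filter[symmetric])

lemma mv_ind: assumes "i < n" shows "mv n (adjf E) (ind A) i = real (card (nbhd n E i \<inter> A))"
proof -
  have "mv n (adjf E) (ind A) i = (\<Sum>j<n. if E i j \<and> j \<in> A then 1 else 0)"
    unfolding mv_def adjf_def ind_def by (intro sum.cong) auto
  also have "\<dots> = real (card {j\<in>{..<n}. E i j \<and> j \<in> A})" by (rule sum_ind_card) simp
  also have "{j\<in>{..<n}. E i j \<and> j \<in> A} = nbhd n E i \<inter> A" unfolding nbhd_def by auto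
  finally show ?thesis .
qed

lemma mv_one: assumes "i < n" shows "mv n (adjf E) (ind UNIV) i = real (deg n E i)"
  using mv_ind[OF assms, of E UNIV] by (simp add: deg_def)

lemma dotp_ind: assumes "S \<subseteq> {..<n}" shows "dotp n (ind S) f = (\<Sum>i\<in>S. f i)"
proof -
  have "dotp n (ind S) f = (\<Sum>i<n. if i \<in> S then f i else 0)"
    unfolding dotp_def ind_def by (intro sum.cong) auto
  also have "\<dots> = (\<Sum>i\<in>{i\<in>{..<n}. i \<in> S}. f i)" by (rule sum.inter_filter[symmetric]) simp
  also have "{i\<in>{..<n}. i \<in> S} = S" using assms by auto
  finally show ?thesis .
qed

lemma dotp_ind_ind: assumes "S \<subseteq> {..<n}" shows "dotp n (ind S) (ind S) = real (card S)"
  using dotp_ind[OF assms, of "ind S"] by (simp add: ind_def)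

lemma dotp_one: "dotp n (ind UNIV) f = (\<Sum>i<n. f i)"
  unfolding dotp_def ind_def by simp

lemma deg_bounds:
  assumes "i < n"
  shows "real (min_deg n E) \<le> real (deg n E i)" "real (deg n E i) \<le> real (max_deg n E)"
proof -
  have f: "finite (deg n E ` {..<n})" by simp
  have m: "deg n E i \<in> deg n E ` {..<n}" using assms by simp
  show "real (min_deg n E) \<le> real (deg n E i)" unfolding min_deg_def using Min_le[OF f m] by simp
  show "real (deg n E i) \<le> real (max_deg n E)" unfolding max_deg_def using Max_ge[OF f m] by simp
qed

lemma graph_bound:
  assumes g: "is_graph n E" and n: "n > 0" and Dpos: "max_deg n E > 0"
    and A: "A \<subseteq> {..<n}" and S: "S \<subseteq> {..<n}"
    and Sdeg: "\<forall>v\<in>S. real (card (nbhd n E v \<inter> A)) > eta * real (max_deg n E)"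
    and eta0: "eta > 0" and eta1: "eta \<ge> 2 * real (card A) / real n"
    and eta2: "eta^2 \<ge> kapf n E"
  shows "real (card S) \<le> 4 * kapf n E * real (card A)"
proof -
  from spec_decomp[OF g n] obtain V e k0 where k0: "k0 < n"
    and o: "\<forall>k<n. \<forall>l<n. dotp n (V k) (V l) = kd k l"
    and c: "\<forall>i<n. \<forall>j<n. (\<Sum>k<n. V k i * V k j) = kd i j"
    and dec: "\<forall>i<n. \<forall>j<n. adjf E i j = (\<Sum>k<n. e k * V k i * V k j)"
    and ev: "\<forall>k<n. \<forall>i<n. mv n (adjf E) (V k) i = e k * V k i"
    and lamb: "\<forall>k<n. k \<noteq> k0 \<longrightarrow> \<bar>e k\<bar> \<le> spec_lambda n E" by blast
  define M where "M = adjf E"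
  define Dr where "Dr = real (max_deg n E)"
  define dr where "dr = real (min_deg n E)"
  define lam where "lam = spec_lambda n E"
  define v where "v = V k0"
  define mu where "mu = e k0"
  define one where "one = ind UNIV"
  have Dr0: "Dr > 0" unfolding Dr_def using Dpos by simp
  have lam0: "lam \<ge> 0" unfolding lam_def spec_lambda_def by simp
  have mix: "\<bar>dotp n x (mv n M y) - mu * dotp n x v * dotp n y v\<bar> \<le> lam * sqrt (dotp n x x) * sqrt (dotp n y y)" for x y
    unfolding M_def mu_def v_def lam_def
    by (rule mixing[OF c dec k0 lamb]) (use lam0 in \<open>simp add: lam_def\<close>)
  have vv: "dotp n v v = 1" using o k0 unfolding v_def kd_def by simp
  have vev: "mv n M v i = mu * v i" if "i < n" for i using ev k0 that unfolding M_def v_def mu_def by simp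
  have M0: "M i j \<ge> 0" for i j unfolding M_def adjf_def by simp
  have mub: "\<bar>mu\<bar> \<le> Dr"
  proof -
    have fin: "finite ((\<lambda>j. \<bar>v j\<bar>) ` {..<n})" and ne: "(\<lambda>j. \<bar>v j\<bar>) ` {..<n} \<noteq> {}" using n by auto
    obtain i where i: "i < n" "\<bar>v i\<bar> = Max ((\<lambda>j. \<bar>v j\<bar>) ` {..<n})"
      using Max_in[OF fin ne] by auto
    have imax: "\<bar>v j\<bar> \<le> \<bar>v i\<bar>" if "j < n" for j using Max_ge[OF fin] that i(2) by simp
    have vi: "\<bar>v i\<bar> > 0"
    proof (rule ccontr)
      assume "\<not> \<bar>v i\<bar> > 0"
      hence "\<forall>j<n. v j = 0" using imax by (metis abs_ge_zero abs_le_zero_iff order.trans linorder_not_less)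
      hence "dotp n v v = 0" unfolding dotp_def by simp
      thus False using vv by simp
    qed
    have "\<bar>mu\<bar> * \<bar>v i\<bar> = \<bar>mv n M v i\<bar>" using vev[OF i(1)] by (simp add: abs_mult)
    also have "\<dots> \<le> (\<Sum>j<n. \<bar>M i j * v j\<bar>)" unfolding mv_def by (rule sum_abs)
    also have "\<dots> \<le> (\<Sum>j<n. M i j * \<bar>v i\<bar>)"
    proof (rule sum_mono)
      fix j assume "j \<in> {..<n}"
      hence "\<bar>v j\<bar> \<le> \<bar>v i\<bar>" using imax by simp
      thus "\<bar>M i j * v j\<bar> \<le> M i j * \<bar>v i\<bar>" using M0[of i j] by (simp add: abs_mult mult_left_mono)
    qed
    also have "\<dots> = mv n M one i * \<bar>v i\<bar>" unfolding mv_def one_def ind_def by (simp add: sum_distrib_right)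
    also have "mv n M one i = real (deg n E i)" unfolding M_def one_def by (rule mv_one[OF i(1)])
    also have "real (deg n E i) * \<bar>v i\<bar> \<le> Dr * \<bar>v i\<bar>"
      using deg_bounds(2)[OF i(1), of E] unfolding Dr_def by (intro mult_right_mono) auto
    finally show ?thesis using vi by simp
  qed
  define a where "a = dotp n one v"
  have sumdeg: "dotp n one (mv n M one) \<ge> real n * dr"
  proof -
    have "dotp n one (mv n M one) = (\<Sum>i<n. real (deg n E i))"
      unfolding one_def dotp_one M_def using mv_one by (intro sum.cong) auto
    also have "\<dots> \<ge> (\<Sum>i<n. dr)" using deg_bounds(1) unfolding dr_def by (intro sum_mono) auto
    finally show ?thesis by simp
  qed
  have oneone: "dotp n one one = real n" unfolding one_def dotp_one by (simp add: ind_def)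
  have "dotp n one (mv n M one) \<le> mu * a * a + lam * sqrt (real n) * sqrt (real n)"
    using mix[of one one] unfolding oneone a_def by (simp add: dotp_comm[of n v one])
  also have "lam * sqrt (real n) * sqrt (real n) = lam * real n" by (simp add: mult.assoc)
  also have "mu * a * a \<le> Dr * a^2"
  proof -
    have "mu * a * a \<le> \<bar>mu\<bar> * a^2" by (simp add: power2_eq_square mult.assoc abs_le_iff mult_right_mono)
    also have "\<dots> \<le> Dr * a^2" using mub by (intro mult_right_mono) auto
    finally show ?thesis .
  qed
  finally have star: "real n * dr \<le> Dr * a^2 + lam * real n" using sumdeg by linarith
  define r where "r = (\<lambda>i. v i - a / real n)"
  have suma: "(\<Sum>i<n. v i) = a" unfolding a_def one_def dotp_one ..
  have rr: "dotp n r r = 1 - a^2 / real n"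
  proof -
    have "dotp n r r = (\<Sum>i<n. v i * v i) - 2 * (a / real n) * (\<Sum>i<n. v i) + real n * (a / real n)^2"
      unfolding dotp_def r_def
      by (simp add: power2_eq_square algebra_simps sum.distrib sum_subtractf sum_distrib_left sum_divide_distrib)
    also have "\<dots> = 1 - a^2 / real n" using vv n unfolding dotp_def suma
      by (simp add: power2_eq_square field_simps)
    finally show ?thesis .
  qed
  have rr0: "dotp n r r \<ge> 0" unfolding dotp_def by (intro sum_nonneg) auto
  define th where "th = thetaf n E"
  have rrth: "dotp n r r \<le> th"
  proof -
    have "real n * (dr - lam) \<le> Dr * a^2" using star by (simp add: algebra_simps)
    hence "(dr - lam) / Dr \<le> a^2 / real n" using Dr0 n by (simp add: field_simps)
    thus ?thesis unfolding rr th_def thetaf_def Dr_def dr_def lam_def by simp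
  qed
  have th0: "th \<ge> 0" using rr0 rrth by simp
  have a2: "a^2 \<le> real n" using rr0 n unfolding rr by (simp add: field_simps)
  have absa: "\<bar>a\<bar> \<le> sqrt (real n)" using a2 real_sqrt_le_mono[OF a2] by simp
  have sbound: "\<bar>dotp n (ind T) v\<bar> \<le> real (card T) / sqrt (real n) + sqrt (real (card T)) * sqrt th"
    if T: "T \<subseteq> {..<n}" for T
  proof -
    have "dotp n (ind T) v = dotp n (ind T) (\<lambda>i. a / real n + r i)"
      by (rule dotp_cong) (simp add: r_def)
    also have "\<dots> = (\<Sum>i<n. a / real n * (ind T i * ind T i) + ind T i * r i)"
      unfolding dotp_def by (intro sum.cong) (auto simp: ind_def algebra_simps)
    also have "\<dots> = (a / real n) * dotp n (ind T) (ind T) + dotp n (ind T) r"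
      unfolding dotp_def by (simp add: sum.distrib sum_distrib_left)
    also have "dotp n (ind T) (ind T) = real (card T)" by (rule dotp_ind_ind[OF T])
    finally have eq: "dotp n (ind T) v = a / real n * real (card T) + dotp n (ind T) r" .
    have "\<bar>dotp n (ind T) r\<bar> \<le> (\<Sum>i<n. \<bar>ind T i\<bar> * \<bar>r i\<bar>)"
      unfolding dotp_def by (rule order.trans[OF sum_abs]) (simp add: abs_mult)
    also have "\<dots> \<le> sqrt (\<Sum>i<n. (ind T i)^2) * sqrt (\<Sum>i<n. (r i)^2)" by (rule cs_sqrt)
    also have "(\<Sum>i<n. (ind T i)^2) = real (card T)"
      using dotp_ind_ind[OF T] unfolding dotp_def by (simp add: power2_eq_square)
    also have "(\<Sum>i<n. (r i)^2) = dotp n r r" unfolding dotp_def by (simp add: power2_eq_square)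
    also have "sqrt (real (card T)) * sqrt (dotp n r r) \<le> sqrt (real (card T)) * sqrt th"
      using rrth by (intro mult_left_mono) auto
    finally have b1: "\<bar>dotp n (ind T) r\<bar> \<le> sqrt (real (card T)) * sqrt th" .
    have "\<bar>a / real n * real (card T)\<bar> = \<bar>a\<bar> * real (card T) / real n" by (simp add: abs_mult)
    also have "\<dots> \<le> sqrt (real n) * real (card T) / real n"
      using absa n by (intro divide_right_mono mult_right_mono) auto
    also have "\<dots> = real (card T) / sqrt (real n)"
      using n by (simp add: field_simps real_sqrt_mult[symmetric])
    finally have b2: "\<bar>a / real n * real (card T)\<bar> \<le> real (card T) / sqrt (real n)" .
    show ?thesis unfolding eq using b1 b2 by linarith
  qed
  define eSA where "eSA = dotp n (ind S) (mv n M (ind A))"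
  have eSA_eq: "eSA = (\<Sum>u\<in>S. real (card (nbhd n E u \<inter> A)))"
    unfolding eSA_def dotp_ind[OF S] M_def using S by (intro sum.cong) (auto simp: mv_ind)
  have lower: "eta * Dr * real (card S) \<le> eSA"
  proof -
    have "(\<Sum>u\<in>S. eta * Dr) \<le> (\<Sum>u\<in>S. real (card (nbhd n E u \<inter> A)))"
      using Sdeg unfolding Dr_def by (intro sum_mono) (auto simp: less_imp_le)
    thus ?thesis unfolding eSA_eq by (simp add: mult_ac)
  qed
  define sS where "sS = dotp n (ind S) v"
  define sA where "sA = dotp n (ind A) v"
  define bS where "bS = real (card S) / sqrt (real n) + sqrt (real (card S)) * sqrt th"
  define bA where "bA = real (card A) / sqrt (real n) + sqrt (real (card A)) * sqrt th"
  have hS: "\<bar>sS\<bar> \<le> bS" unfolding sS_def bS_def by (rule sbound[OF S])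
  have hA: "\<bar>sA\<bar> \<le> bA" unfolding sA_def bA_def by (rule sbound[OF A])
  have "eSA \<le> mu * sS * sA + lam * sqrt (real (card S)) * sqrt (real (card A))"
    using mix[of "ind S" "ind A"] unfolding eSA_def sS_def sA_def dotp_ind_ind[OF S] dotp_ind_ind[OF A]
    by linarith
  also have "mu * sS * sA \<le> Dr * (bS * bA)"
  proof -
    have "mu * sS * sA \<le> \<bar>mu\<bar> * (\<bar>sS\<bar> * \<bar>sA\<bar>)" by (simp add: abs_mult[symmetric] mult.assoc)
    also have "\<dots> \<le> Dr * (bS * bA)"
      using mub hS hA by (intro mult_mono) auto
    finally show ?thesis .
  qed
  finally have upper: "eSA \<le> Dr * (bS * bA) + lam * sqrt (real (card S)) * sqrt (real (card A))" by simp
  have cS: "real (card S) \<le> real n" using card_mono[OF _ S] by simp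
  have cA: "real (card A) \<le> real n" using card_mono[OF _ A] by simp
  show ?thesis
  proof (rule final_alg[where D = Dr and n = "real n" and rho = "sqrt th" and l = lam and e = eSA and eta = eta])
    show "kapf n E = 2 * sqrt th + (sqrt th)^2 + lam / Dr"
      unfolding kapf_def th_def lam_def Dr_def using th0 th_def by simp
  qed (use Dr0 n cS cA lam0 eta0 eta1 eta2 lower upper th0 in \<open>auto simp: bS_def bA_def\<close>)
qed


lemma smallo_by_bound:
  fixes f g h :: "nat \<Rightarrow> real"
  assumes h: "h \<longlonglongrightarrow> 0" and ev: "eventually (\<lambda>n. \<bar>f n\<bar> \<le> h n * \<bar>g n\<bar>) sequentially"
  shows "f \<in> o(g)"
proof (rule landau_o.smallI)
  fix c :: real assume c: "c > 0"
  have "eventually (\<lambda>n. \<bar>h n\<bar> < c) sequentially"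
    using h c by (simp add: tendsto_iff dist_real_def)
  thus "eventually (\<lambda>n. norm (f n) \<le> c * norm (g n)) sequentially"
  proof (rule eventually_elim2[OF _ ev])
    fix n assume a: "\<bar>h n\<bar> < c" and b: "\<bar>f n\<bar> \<le> h n * \<bar>g n\<bar>"
    have "h n * \<bar>g n\<bar> \<le> c * \<bar>g n\<bar>" using a by (intro mult_right_mono) auto
    thus "norm (f n) \<le> c * norm (g n)" using b by simp
  qed
qed

lemma ratio_le1:
  assumes "finite X"
  shows "real (card (X \<inter> Y)) / real (card X) \<le> 1"
proof (cases "card X = 0")
  case True thus ?thesis by simp
next
  case False
  have "card (X \<inter> Y) \<le> card X" using assms by (intro card_mono) auto
  thus ?thesis using False by simp
qed

lemma finite_nbhd: "finite (nbhd n E v)" unfolding nbhd_def by simp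

theorem lemma2p12:
  fixes G Gt :: "nat \<Rightarrow> nat \<Rightarrow> nat \<Rightarrow> bool"
    and A :: "nat \<Rightarrow> nat set"
    and \<epsilon> :: real
  assumes exp: "expander_sequence G"
    and eps: "\<epsilon> > 0"
    and sub_graph: "\<And>n. is_graph n (Gt n)"
    and sub: "\<And>n u v. Gt n u v \<Longrightarrow> G n u v"
    and keep: "\<And>n v. v < n \<Longrightarrow> real (deg n (Gt n) v) \<ge> (1/2 + \<epsilon>) * real (deg n (G n) v)"
    and A_sub: "\<And>n. A n \<subseteq> {..<n}"
    and A_small: "(\<lambda>n. real (card (A n))) \<in> o(\<lambda>n. real n)"
  shows
    "(\<exists>B :: nat \<Rightarrow> nat set. \<exists>\<delta> :: nat \<Rightarrow> real.
        (\<forall>n. B n \<subseteq> A n) \<and>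
        (\<lambda>n. real (card (A n - B n))) \<in> o(\<lambda>n. real (card (A n))) \<and>
        \<delta> \<longlonglongrightarrow> 0 \<and>
        (\<forall>n. \<forall>u\<in>B n. real (card (nbhd n (Gt n) u \<inter> A n)) / real (card (nbhd n (Gt n) u)) \<le> \<delta> n))
   \<and>
    (\<exists>B :: nat \<Rightarrow> nat set. \<exists>\<delta> :: nat \<Rightarrow> real.
        (\<forall>n. B n \<subseteq> {..<n} - A n) \<and>
        (\<lambda>n. real (card ({..<n} - (A n \<union> B n)))) \<in> o(\<lambda>n. real (card (A n))) \<and>
        \<delta> \<longlonglongrightarrow> 0 \<and>
        (\<forall>n. \<forall>v\<in>B n. real (card (nbhd n (Gt n) v \<inter> A n)) / real (card (nbhd n (Gt n) v)) \<le> \<delta> n))"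
proof -
  have g: "\<And>n. is_graph n (G n)" and ratio: "(\<lambda>n. real (max_deg n (G n)) / real (min_deg n (G n))) \<longlonglongrightarrow> 1"
    and lamo: "(\<lambda>n. spec_lambda n (G n)) \<in> o(\<lambda>n. real (max_deg n (G n)))"
    using exp unfolding expander_sequence_def by auto
  define D where "D = (\<lambda>n. real (max_deg n (G n)))"
  define d where "d = (\<lambda>n. real (min_deg n (G n)))"
  define lam where "lam = (\<lambda>n. spec_lambda n (G n))"
  define alp where "alp = (\<lambda>n. real (card (A n)))"
  define kap where "kap = (\<lambda>n. kapf n (G n))"
  define eta where "eta = (\<lambda>n. max (2 * alp n / real n) (sqrt \<bar>kap n\<bar>))"
  define del where "del = (\<lambda>n. if d n > 0 then 2 * eta n * D n / d n else 1)"
  have eta0: "eta n \<ge> 0" for n unfolding eta_def by (rule max.coboundedI2) simp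
  have D0: "D n \<ge> 0" for n unfolding D_def by simp
  have "eventually (\<lambda>n. D n / d n > 1/2) sequentially"
    using order_tendstoD(1)[OF ratio, of "1/2"] unfolding D_def d_def by simp
  hence evd: "eventually (\<lambda>n. d n > 0) sequentially"
  proof (rule eventually_mono)
    fix n assume h: "D n / d n > 1/2"
    show "d n > 0"
    proof (rule ccontr)
      assume "\<not> d n > 0"
      hence "d n = 0" unfolding d_def by simp
      thus False using h by simp
    qed
  qed
  have evn: "eventually (\<lambda>n. n > 0) sequentially" by (rule eventually_gt_at_top)
  have Dd: "d n \<le> D n" if "n > 0" for n
    using deg_bounds[of 0 n "G n"] that unfolding D_def d_def by linarith
  have lim_dD: "(\<lambda>n. d n / D n) \<longlonglongrightarrow> 1"
  proof -
    have "(\<lambda>n. inverse (D n / d n)) \<longlonglongrightarrow> inverse 1"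
      using ratio unfolding D_def d_def by (intro tendsto_inverse) auto
    thus ?thesis by (simp add: inverse_divide)
  qed
  have lim_lD: "(\<lambda>n. lam n / D n) \<longlonglongrightarrow> 0"
    using smalloD_tendsto[OF lamo] unfolding lam_def D_def .
  have th_eq: "thetaf n (G n) = 1 - d n / D n + lam n / D n" for n
    unfolding thetaf_def d_def D_def lam_def by (simp add: diff_divide_distrib)
  have lim_th: "(\<lambda>n. thetaf n (G n)) \<longlonglongrightarrow> 0"
  proof -
    have "(\<lambda>n. 1 - d n / D n + lam n / D n) \<longlonglongrightarrow> 1 - 1 + 0"
      by (intro tendsto_intros lim_dD lim_lD)
    thus ?thesis unfolding th_eq by simp
  qed
  have lim_kap: "kap \<longlonglongrightarrow> 0"
  proof -
    have "(\<lambda>n. 2 * sqrt (thetaf n (G n)) + thetaf n (G n) + lam n / D n) \<longlonglongrightarrow> 2 * sqrt 0 + 0 + 0"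
      by (intro tendsto_intros lim_th lim_lD)
    thus ?thesis unfolding kap_def kapf_def lam_def D_def by simp
  qed
  have lim_alp: "(\<lambda>n. alp n / real n) \<longlonglongrightarrow> 0"
    using smalloD_tendsto[OF A_small] unfolding alp_def .
  have lim_eta: "eta \<longlonglongrightarrow> 0"
  proof -
    have "(\<lambda>n. max (2 * (alp n / real n)) (sqrt \<bar>kap n\<bar>)) \<longlonglongrightarrow> max (2 * 0) (sqrt \<bar>0\<bar>)"
      by (intro tendsto_intros lim_alp lim_kap)
    thus ?thesis unfolding eta_def by simp
  qed
  have lim_del: "del \<longlonglongrightarrow> 0"
  proof -
    have lim1: "(\<lambda>n. 2 * eta n * (D n / d n)) \<longlonglongrightarrow> 2 * 0 * 1"
      using ratio unfolding D_def d_def by (intro tendsto_intros lim_eta) auto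
    have "eventually (\<lambda>n. 2 * eta n * (D n / d n) = del n) sequentially"
      using evd by (rule eventually_mono) (simp add: del_def)
    from tendsto_cong[OF this] lim1 show ?thesis by simp
  qed
  have bound: "real (card {v \<in> X. eta n * D n < real (card (nbhd n (G n) v \<inter> A n))}) \<le> 4 * kap n * alp n"
    if X: "X \<subseteq> {..<n}" and n: "n > 0" and Dp: "D n > 0" for X n
  proof (cases "eta n = 0")
    case True
    hence "2 * alp n / real n \<le> 0" unfolding eta_def by simp
    hence "alp n = 0" using n unfolding alp_def by (simp add: divide_le_0_iff)
    hence "A n = {}" using finite_subset[OF A_sub[of n]] unfolding alp_def by simp
    hence e: "{v \<in> X. eta n * D n < real (card (nbhd n (G n) v \<inter> A n))} = {}" using True by simp
    show ?thesis unfolding e using \<open>alp n = 0\<close> by simp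
  next
    case False
    hence ep: "eta n > 0" using eta0[of n] by simp
    have k: "\<bar>kap n\<bar> \<le> (eta n)^2"
    proof -
      have "sqrt \<bar>kap n\<bar> \<le> eta n" unfolding eta_def by simp
      hence "(sqrt \<bar>kap n\<bar>)^2 \<le> (eta n)^2" by (intro power_mono) auto
      thus ?thesis by simp
    qed
    show ?thesis unfolding kap_def alp_def
    proof (rule graph_bound[OF g n])
      show "0 < max_deg n (G n)" using Dp unfolding D_def by simp
      show "A n \<subseteq> {..<n}" by (rule A_sub)
      show "{v \<in> X. eta n * D n < real (card (nbhd n (G n) v \<inter> A n))} \<subseteq> {..<n}" using X by auto
      show "\<forall>v\<in>{v \<in> X. eta n * D n < real (card (nbhd n (G n) v \<inter> A n))}.
          eta n * real (max_deg n (G n)) < real (card (nbhd n (G n) v \<inter> A n))" unfolding D_def by auto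
      show "0 < eta n" by (rule ep)
      show "2 * real (card (A n)) / real n \<le> eta n" unfolding eta_def alp_def by simp
      show "kapf n (G n) \<le> (eta n)^2" using k unfolding kap_def by simp
    qed
  qed
  have evgood: "eventually (\<lambda>n. n > 0 \<and> D n > 0) sequentially"
    using eventually_conj[OF evn evd]
  proof (rule eventually_mono)
    fix n assume h: "n > 0 \<and> d n > 0"
    hence "d n \<le> D n" using Dd by blast
    thus "n > 0 \<and> D n > 0" using h by linarith
  qed
  have ratio_bd: "real (card (nbhd n (Gt n) u \<inter> A n)) / real (card (nbhd n (Gt n) u)) \<le> del n"
    if u: "u < n" and small: "real (card (nbhd n (G n) u \<inter> A n)) \<le> eta n * D n" for n u
  proof (cases "d n > 0")
    case False
    thus ?thesis unfolding del_def using ratio_le1[OF finite_nbhd] by simp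
  next
    case True
    have sub1: "nbhd n (Gt n) u \<subseteq> nbhd n (G n) u" unfolding nbhd_def using sub by auto
    have num: "real (card (nbhd n (Gt n) u \<inter> A n)) \<le> eta n * D n"
    proof -
      have "card (nbhd n (Gt n) u \<inter> A n) \<le> card (nbhd n (G n) u \<inter> A n)"
        using sub1 by (intro card_mono) (auto simp: finite_nbhd)
      thus ?thesis using small by linarith
    qed
    have den: "d n / 2 \<le> real (card (nbhd n (Gt n) u))"
    proof -
      have "d n \<le> real (deg n (G n) u)" using deg_bounds(1)[OF u, of "G n"] unfolding d_def .
      hence "(1/2) * d n \<le> (1/2 + \<epsilon>) * real (deg n (G n) u)"
        using eps True by (intro mult_mono) auto
      also have "\<dots> \<le> real (deg n (Gt n) u)" by (rule keep[OF u])
      finally show ?thesis unfolding deg_def by simp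
    qed
    have "real (card (nbhd n (Gt n) u \<inter> A n)) / real (card (nbhd n (Gt n) u)) \<le> (eta n * D n) / (d n / 2)"
      using num den True eta0[of n] D0[of n] by (intro frac_le) auto
    also have "\<dots> = del n" unfolding del_def using True by (simp add: field_simps)
    finally show ?thesis .
  qed
  show ?thesis
  proof (intro conjI)
    define B where "B = (\<lambda>n. {u \<in> A n. real (card (nbhd n (G n) u \<inter> A n)) \<le> eta n * D n})"
    show "\<exists>B \<delta>. (\<forall>n. B n \<subseteq> A n) \<and>
        (\<lambda>n. real (card (A n - B n))) \<in> o(\<lambda>n. real (card (A n))) \<and>
        \<delta> \<longlonglongrightarrow> 0 \<and>
        (\<forall>n. \<forall>u\<in>B n. real (card (nbhd n (Gt n) u \<inter> A n)) / real (card (nbhd n (Gt n) u)) \<le> \<delta> n)"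
    proof (intro exI conjI allI ballI)
      show "B n \<subseteq> A n" for n unfolding B_def by auto
      show "del \<longlonglongrightarrow> 0" by (rule lim_del)
      show "real (card (nbhd n (Gt n) u \<inter> A n)) / real (card (nbhd n (Gt n) u)) \<le> del n"
        if "u \<in> B n" for n u
        using that A_sub[of n] unfolding B_def by (intro ratio_bd) auto
      show "(\<lambda>n. real (card (A n - B n))) \<in> o(\<lambda>n. real (card (A n)))"
      proof (rule smallo_by_bound[where h = "\<lambda>n. 4 * kap n"])
        show "(\<lambda>n. 4 * kap n) \<longlonglongrightarrow> 0" using tendsto_mult_right_zero[OF lim_kap, of 4] by simp
        show "eventually (\<lambda>n. \<bar>real (card (A n - B n))\<bar> \<le> 4 * kap n * \<bar>real (card (A n))\<bar>) sequentially"
          using evgood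
        proof (rule eventually_mono)
          fix n assume "n > 0 \<and> D n > 0"
          hence "real (card {v \<in> A n. eta n * D n < real (card (nbhd n (G n) v \<inter> A n))}) \<le> 4 * kap n * alp n"
            using A_sub[of n] by (intro bound) auto
          moreover have "A n - B n = {v \<in> A n. eta n * D n < real (card (nbhd n (G n) v \<inter> A n))}"
            unfolding B_def by auto
          ultimately show "\<bar>real (card (A n - B n))\<bar> \<le> 4 * kap n * \<bar>real (card (A n))\<bar>"
            unfolding alp_def by simp
        qed
      qed
    qed
  next
    define B where "B = (\<lambda>n. {v \<in> {..<n} - A n. real (card (nbhd n (G n) v \<inter> A n)) \<le> eta n * D n})"
    show "\<exists>B \<delta>. (\<forall>n. B n \<subseteq> {..<n} - A n) \<and>
        (\<lambda>n. real (card ({..<n} - (A n \<union> B n)))) \<in> o(\<lambda>n. real (card (A n))) \<and>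
        \<delta> \<longlonglongrightarrow> 0 \<and>
        (\<forall>n. \<forall>v\<in>B n. real (card (nbhd n (Gt n) v \<inter> A n)) / real (card (nbhd n (Gt n) v)) \<le> \<delta> n)"
    proof (intro exI conjI allI ballI)
      show "B n \<subseteq> {..<n} - A n" for n unfolding B_def by auto
      show "del \<longlonglongrightarrow> 0" by (rule lim_del)
      show "real (card (nbhd n (Gt n) u \<inter> A n)) / real (card (nbhd n (Gt n) u)) \<le> del n"
        if "u \<in> B n" for n u
        using that unfolding B_def by (intro ratio_bd) auto
      show "(\<lambda>n. real (card ({..<n} - (A n \<union> B n)))) \<in> o(\<lambda>n. real (card (A n)))"
      proof (rule smallo_by_bound[where h = "\<lambda>n. 4 * kap n"])
        show "(\<lambda>n. 4 * kap n) \<longlonglongrightarrow> 0" using tendsto_mult_right_zero[OF lim_kap, of 4] by simp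
        show "eventually (\<lambda>n. \<bar>real (card ({..<n} - (A n \<union> B n)))\<bar> \<le> 4 * kap n * \<bar>real (card (A n))\<bar>) sequentially"
          using evgood
        proof (rule eventually_mono)
          fix n assume "n > 0 \<and> D n > 0"
          hence "real (card {v \<in> {..<n} - A n. eta n * D n < real (card (nbhd n (G n) v \<inter> A n))}) \<le> 4 * kap n * alp n"
            by (intro bound) auto
          moreover have "{..<n} - (A n \<union> B n) = {v \<in> {..<n} - A n. eta n * D n < real (card (nbhd n (G n) v \<inter> A n))}"
            unfolding B_def by auto
          ultimately show "\<bar>real (card ({..<n} - (A n \<union> B n)))\<bar> \<le> 4 * kap n * \<bar>real (card (A n))\<bar>"
            unfolding alp_def by simp
        qed
      qed
    qed
  qed
qed


end
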